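(* Fix $\varepsilon\in(0,1)$, a positive sequence $\lambda_n\to0$, and a nonzero positive semidefinite $2\times2$ matrix $\mathbf{V}$. There exists a finite constant $h(\mathbf{V},\varepsilon)$ such that, for all sufficiently large $n$, $$\Psi^{-1}(\mathbf{V},\varepsilon+\lambda_n)\subset\Psi^{-1}(\mathbf{V},\varepsilon)+h(\mathbf{V},\varepsilon)\lambda_n\mathbf{1},$$ where $\mathbf{1}=(1,1)^T$ and $A+c\mathbf{1}:=\{\mathbf{a}+c\mathbf{1}:\mathbf{a}\in A\}$.
   Context: For a nonzero positive semidefinite $2\times2$ matrix $\mathbf{V}$ and $\varepsilon\in(0,1)$: $\Psi(z_1,z_2;\mathbf{V}):=\Pr(U_1\le z_1,U_2\le z_2)$ for $\mathbf{U}\sim\mathcal{N}(\mathbf{0},\mathbf{V})$, and $\Psi^{-1}(\mathbf{V},\varepsilon):=\{(z_1,z_2)\in\mathbb{R}^2:\Psi(-z_1,-z_2;\mathbf{V})\ge1-\varepsilon\}$. *)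

theory Defs
  imports "HOL-Probability.Probability"
begin

definition psd2 :: "real^2^2 \<Rightarrow> bool" where
  "psd2 V \<longleftrightarrow> transpose V = V \<and> (\<forall>x::real^2. 0 \<le> x \<bullet> (V *v x))"

definition std_normal2 :: "(real \<times> real) measure" where
  "std_normal2 = density lborel std_normal_density \<Otimes>\<^sub>M density lborel std_normal_density"

text \<open>A square-root factor A with A A^T = V (any choice; the law of A Z does not depend on it).\<close>
definition sqrt_factor :: "real^2^2 \<Rightarrow> real^2^2" where
  "sqrt_factor V = (SOME A. A ** transpose A = V)"

text \<open>The law of U ~ N(0,V), realised as U = A Z with Z standard bivariate normal, A A^T = V.\<close>
definition gauss2 :: "real^2^2 \<Rightarrow> (real \<times> real) measure" where
  "gauss2 V = (let A = sqrt_factor V in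
     distr std_normal2 borel
       (\<lambda>(z1, z2). (A$1$1 * z1 + A$1$2 * z2, A$2$1 * z1 + A$2$2 * z2)))"

definition Psi :: "real \<Rightarrow> real \<Rightarrow> real^2^2 \<Rightarrow> real" where
  "Psi z1 z2 V = measure (gauss2 V) {u. fst u \<le> z1 \<and> snd u \<le> z2}"

definition Psi_inv :: "real^2^2 \<Rightarrow> real \<Rightarrow> (real \<times> real) set" where
  "Psi_inv V \<epsilon> = {(z1, z2). Psi (- z1) (- z2) V \<ge> 1 - \<epsilon>}"

definition shift1 :: "(real \<times> real) set \<Rightarrow> real \<Rightarrow> (real \<times> real) set" where
  "shift1 A c = (\<lambda>(a1, a2). (a1 + c, a2 + c)) ` A"

end

theory Submission
  imports Defs
begin


abbreviation "NN \<equiv> density lborel (\<lambda>x. ennreal (std_normal_density x))"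

lemma NN_prob: "prob_space NN"
  by (simp add: prob_space_normal_density)

lemma sets_NN[simp]: "sets NN = sets borel" by simp
lemma space_NN[simp]: "space NN = UNIV" by simp

lemma phi_mono: "\<bar>y\<bar> \<le> m \<Longrightarrow> std_normal_density m \<le> std_normal_density y"
  unfolding std_normal_density_def
proof -
  assume "\<bar>y\<bar> \<le> m"
  then have "y\<^sup>2 \<le> m\<^sup>2" by (metis abs_le_square_iff abs_of_nonneg abs_ge_zero order_trans)
  then show "1 / sqrt (2 * pi) * exp (- m\<^sup>2 / 2) \<le> 1 / sqrt (2 * pi) * exp (- y\<^sup>2 / 2)"
    by (intro mult_left_mono) auto
qed

lemma NN_interval:
  assumes "-M \<le> e" "e + r \<le> M" "0 < r"
  shows "r * std_normal_density M \<le> measure NN {e<..<e+r}"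
proof -
  have "ennreal (r * std_normal_density M) = (\<integral>\<^sup>+y. ennreal (std_normal_density M) * indicator {e<..<e+r} y \<partial>lborel)"
    using assms by (simp add: nn_integral_cmult_indicator ennreal_mult' mult.commute)
  also have "\<dots> \<le> (\<integral>\<^sup>+y. ennreal (std_normal_density y) * indicator {e<..<e+r} y \<partial>lborel)"
  proof (intro nn_integral_mono)
    fix y show "ennreal (std_normal_density M) * indicator {e<..<e+r} y \<le> ennreal (std_normal_density y) * indicator {e<..<e+r} y"
      using assms by (auto simp: indicator_def intro!: phi_mono)
  qed
  also have "\<dots> = emeasure NN {e<..<e+r}"
    by (simp add: emeasure_density)
  finally have "ennreal (r * std_normal_density M) \<le> emeasure NN {e<..<e+r}" .
  moreover have "emeasure NN {e<..<e+r} = ennreal (measure NN {e<..<e+r})"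
    using finite_measure.emeasure_eq_measure[OF prob_space.finite_measure[OF NN_prob]] by blast
  ultimately show ?thesis
    by (simp add: ennreal_le_iff)
qed

lemma NN_tail:
  assumes "0 < \<eta>"
  shows "\<exists>M>0. measure NN {y. M < \<bar>y\<bar>} \<le> \<eta>"
proof -
  interpret prob_space NN by (rule NN_prob)
  let ?A = "\<lambda>n::nat. {y::real. real n < \<bar>y\<bar>}"
  have "(\<lambda>n. measure NN (?A n)) \<longlonglongrightarrow> measure NN (\<Inter>i. ?A i)"
    by (intro finite_Lim_measure_decseq) (auto simp: decseq_def)
  moreover have "(\<Inter>i. ?A i) = {}"
  proof (rule ccontr)
    assume "(\<Inter>i. ?A i) \<noteq> {}"
    then obtain x where "\<And>i. real i < \<bar>x\<bar>" by auto
    moreover obtain n where "\<bar>x\<bar> < real n" using reals_Archimedean2 by blast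
    ultimately show False by (meson less_asym)
  qed
  ultimately have "(\<lambda>n. measure NN (?A n)) \<longlonglongrightarrow> 0" by simp
  then have "\<forall>\<^sub>F n in sequentially. measure NN (?A n) < \<eta>"
    using assms by (simp add: order_tendstoD(2))
  then obtain n where "\<And>m. m \<ge> n \<Longrightarrow> measure NN (?A m) < \<eta>"
    by (auto simp: eventually_sequentially)
  then have "measure NN (?A (Suc n)) \<le> \<eta>" by (meson le_SucI less_imp_le order_refl)
  then show ?thesis by (intro exI[of _ "real (Suc n)"]) auto
qed

lemma gain1d:
  fixes f :: "real \<Rightarrow> real"
  assumes L: "0 < L" and lip: "\<And>u v. f u \<le> f v + L * \<bar>u - v\<bar>"
    and iv: "\<And>u v z. f u \<le> 0 \<Longrightarrow> f v \<le> 0 \<Longrightarrow> u \<le> z \<Longrightarrow> z \<le> v \<Longrightarrow> f z \<le> 0"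
    and y0: "\<bar>y0\<bar> \<le> M" "f y0 \<le> 0" and y1: "\<bar>y1\<bar> \<le> M" "0 < f y1"
    and t: "0 < t" "t \<le> L"
    and meas: "f \<in> borel_measurable borel"
  shows "t / L * std_normal_density (M+1) \<le> measure NN {y. 0 < f y \<and> f y \<le> t}"
proof -
  interpret prob_space NN by (rule NN_prob)
  define r where "r = t / L"
  have r: "0 < r" "r \<le> 1" "L * r = t" using L t by (auto simp: r_def)
  let ?S = "{y. 0 < f y \<and> f y \<le> t}"
  have Ssets: "?S \<in> sets NN" using meas by measurable
  have "\<exists>e. -(M+1) \<le> e \<and> e + r \<le> M+1 \<and> {e<..<e+r} \<subseteq> ?S"
  proof (cases "y0 < y1")
    case True
    define S0 where "S0 = {y. f y \<le> 0}"
    have ub: "y \<le> y1" if "y \<in> S0" for y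
    proof (rule ccontr)
      assume "\<not> y \<le> y1"
      then have "f y1 \<le> 0" using iv[of y0 y y1] y0 True that by (auto simp: S0_def)
      then show False using y1 by simp
    qed
    have ne: "y0 \<in> S0" using y0 by (simp add: S0_def)
    have bdd: "bdd_above S0" using ub by (metis bdd_aboveI)
    define e where "e = Sup S0"
    have e1: "y0 \<le> e" unfolding e_def using ne bdd by (rule cSup_upper)
    have e2: "e \<le> y1" unfolding e_def using ne ub by (auto intro: cSup_least)
    have "{e<..<e+r} \<subseteq> ?S"
    proof
      fix y assume y: "y \<in> {e<..<e+r}"
      have "f y > 0"
      proof (rule ccontr)
        assume "\<not> 0 < f y"
        then have "y \<in> S0" by (simp add: S0_def)
        then have "y \<le> e" unfolding e_def using bdd by (rule cSup_upper)
        then show False using y by simp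
      qed
      moreover have "f y \<le> t"
      proof -
        have "y - r < Sup S0" using y by (simp add: e_def)
        then obtain s where s: "s \<in> S0" "y - r < s" using less_cSup_iff[OF _ bdd] ne by blast
        have "s \<le> e" unfolding e_def using s(1) bdd by (rule cSup_upper)
        then have "\<bar>y - s\<bar> < r" using s y by auto
        then have "L * \<bar>y - s\<bar> \<le> L * r" using L by simp
        then show ?thesis using lip[of y s] s(1) r by (simp add: S0_def)
      qed
      ultimately show "y \<in> ?S" by simp
    qed
    moreover have "-(M+1) \<le> e" "e + r \<le> M+1" using e1 e2 y0 y1 r by auto
    ultimately show ?thesis by blast
  next
    case False
    then have yl: "y1 < y0" using y0 y1 by (cases "y0 = y1") auto
    define S0 where "S0 = {y. f y \<le> 0}"
    have lb: "y1 \<le> y" if "y \<in> S0" for y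
    proof (rule ccontr)
      assume "\<not> y1 \<le> y"
      then have "f y1 \<le> 0" using iv[of y y0 y1] y0 yl that by (auto simp: S0_def)
      then show False using y1 by simp
    qed
    have ne: "y0 \<in> S0" using y0 by (simp add: S0_def)
    have bdd: "bdd_below S0" using lb by (metis bdd_belowI)
    define e where "e = Inf S0"
    have e1: "e \<le> y0" unfolding e_def using ne bdd by (rule cInf_lower)
    have e2: "y1 \<le> e" unfolding e_def using ne lb by (auto intro: cInf_greatest)
    have "{e-r<..<e-r+r} \<subseteq> ?S"
    proof
      fix y assume y: "y \<in> {e-r<..<e-r+r}"
      have "f y > 0"
      proof (rule ccontr)
        assume "\<not> 0 < f y"
        then have "y \<in> S0" by (simp add: S0_def)
        then have "e \<le> y" unfolding e_def using bdd by (rule cInf_lower)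
        then show False using y by simp
      qed
      moreover have "f y \<le> t"
      proof -
        have "Inf S0 < y + r" using y by (simp add: e_def)
        then obtain s where s: "s \<in> S0" "s < y + r" using cInf_less_iff[OF _ bdd] ne by blast
        have "e \<le> s" unfolding e_def using s(1) bdd by (rule cInf_lower)
        then have "\<bar>y - s\<bar> < r" using s y by auto
        then have "L * \<bar>y - s\<bar> \<le> L * r" using L by simp
        then show ?thesis using lip[of y s] s(1) r by (simp add: S0_def)
      qed
      ultimately show "y \<in> ?S" by simp
    qed
    moreover have "-(M+1) \<le> e - r" "e - r + r \<le> M+1" using e1 e2 y0 y1 r by auto
    ultimately show ?thesis by blast
  qed
  then obtain e where e: "-(M+1) \<le> e" "e + r \<le> M+1" "{e<..<e+r} \<subseteq> ?S" by blast
  have "r * std_normal_density (M+1) \<le> measure NN {e<..<e+r}"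
    using NN_interval[OF e(1) e(2) r(1)] .
  also have "\<dots> \<le> measure NN ?S"
    using e(3) Ssets by (intro finite_measure_mono) auto
  finally show ?thesis by (simp add: r_def)
qed



abbreviation "GG \<equiv> NN \<Otimes>\<^sub>M NN"

lemma GG_pair: "pair_prob_space NN NN"
  by (simp add: pair_prob_space.intro pair_sigma_finite.intro NN_prob prob_space_imp_sigma_finite)

lemma GG_prob: "prob_space GG"
proof -
  interpret pair_prob_space NN NN by (rule GG_pair)
  have sf: "sigma_finite_measure NN" by (rule prob_space_imp_sigma_finite[OF NN_prob])
  show ?thesis by (rule P.prob_space_axioms)
qed

lemma std_normal2_GG: "std_normal2 = GG" by (simp add: std_normal2_def)

lemma sets_GG[simp]: "sets GG = sets (borel \<Otimes>\<^sub>M borel)"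
  by (intro sets_pair_measure_cong) auto

lemma integ_v:
  assumes A: "A \<in> sets GG" and D: "D \<in> sets GG" and k: "0 \<le> k"
    and pt: "\<And>x. ennreal k * emeasure NN (Pair x -` A) \<le> emeasure NN (Pair x -` D)"
  shows "k * measure GG A \<le> measure GG D"
proof -
  interpret pair_prob_space NN NN by (rule GG_pair)
  have sf: "sigma_finite_measure NN" by (rule prob_space_imp_sigma_finite[OF NN_prob])
  have "ennreal k * emeasure GG A = ennreal k * (\<integral>\<^sup>+x. emeasure NN (Pair x -` A) \<partial>NN)"
    using A by (simp add: sigma_finite_measure.emeasure_pair_measure_alt[OF sf])
  also have "\<dots> = (\<integral>\<^sup>+x. ennreal k * emeasure NN (Pair x -` A) \<partial>NN)"
    using A by (intro nn_integral_cmult[symmetric] measurable_emeasure_Pair1) simp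
  also have "\<dots> \<le> (\<integral>\<^sup>+x. emeasure NN (Pair x -` D) \<partial>NN)"
    by (intro nn_integral_mono pt)
  also have "\<dots> = emeasure GG D"
    using D by (simp add: sigma_finite_measure.emeasure_pair_measure_alt[OF sf])
  finally have "ennreal k * ennreal (measure GG A) \<le> ennreal (measure GG D)"
    by (simp add: P.emeasure_eq_measure finite_measure.emeasure_eq_measure[OF prob_space.finite_measure[OF NN_prob]])
  then show ?thesis using k by (simp add: ennreal_mult'[symmetric] ennreal_le_iff)
qed

lemma GG_swap:
  assumes A: "A \<in> sets GG"
  shows "measure GG ((\<lambda>(x,y). (y,x)) -` A) = measure GG A"
proof -
  interpret pair_prob_space NN NN by (rule GG_pair)
  have sf: "sigma_finite_measure NN" by (rule prob_space_imp_sigma_finite[OF NN_prob])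
  have "measure GG A = measure (distr GG GG (\<lambda>(x,y). (y,x))) A"
    using distr_pair_swap by simp
  also have "\<dots> = measure GG ((\<lambda>(x,y). (y,x)) -` A \<inter> space GG)"
    using A by (intro measure_distr) (auto simp: measurable_pair_swap')
  finally show ?thesis by (simp add: space_pair_measure)
qed

lemma GG_times1:
  assumes "A \<in> sets borel"
  shows "measure GG (A \<times> UNIV) = measure NN A"
proof -
  interpret pair_prob_space NN NN by (rule GG_pair)
  have sf: "sigma_finite_measure NN" by (rule prob_space_imp_sigma_finite[OF NN_prob])
  show ?thesis using assms
    by (simp add: measure_def sigma_finite_measure.emeasure_pair_measure_Times[OF sf] prob_space.emeasure_space_1[OF NN_prob, simplified])
qed

lemma GG_times2:
  assumes "A \<in> sets borel"
  shows "measure GG (UNIV \<times> A) = measure NN A"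
proof -
  interpret pair_prob_space NN NN by (rule GG_pair)
  have sf: "sigma_finite_measure NN" by (rule prob_space_imp_sigma_finite[OF NN_prob])
  show ?thesis using assms
    by (simp add: measure_def sigma_finite_measure.emeasure_pair_measure_Times[OF sf] prob_space.emeasure_space_1[OF NN_prob, simplified])
qed



definition SS :: "real \<Rightarrow> real \<Rightarrow> real \<Rightarrow> real \<Rightarrow> real \<Rightarrow> real \<Rightarrow> (real \<times> real) set" where
  "SS a b c d w1 w2 = {z. a * fst z + b * snd z \<le> w1 \<and> c * fst z + d * snd z \<le> w2}"

lemma SS_sets[measurable]: "SS a b c d w1 w2 \<in> sets GG"
proof -
  have "{z \<in> space (borel \<Otimes>\<^sub>M borel). a * fst z + b * snd z \<le> w1 \<and> c * fst z + d * snd z \<le> (w2::real)} \<in> sets (borel \<Otimes>\<^sub>M (borel :: real measure))"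
    by measurable
  then show ?thesis by (simp add: SS_def space_pair_measure)
qed

lemma lin_le_max: fixes p k1 u v z :: real
  assumes "u \<le> z" "z \<le> v" shows "p * z + k1 \<le> max (p * u + k1) (p * v + k1)"
proof (cases "0 \<le> p")
  case True then have "p * z \<le> p * v" using assms by (simp add: mult_left_mono)
  then show ?thesis by auto
next
  case False then have "p * z \<le> p * u" using assms by (simp add: mult_left_mono_neg)
  then show ?thesis by auto
qed

lemma maxaff_iv: fixes p k1 p' k2 u v z :: real
  assumes "max (p * u + k1) (p' * u + k2) \<le> 0" "max (p * v + k1) (p' * v + k2) \<le> 0" "u \<le> z" "z \<le> v"
  shows "max (p * z + k1) (p' * z + k2) \<le> 0"
  using lin_le_max[OF assms(3,4), of p k1] lin_le_max[OF assms(3,4), of p' k2] assms(1,2) by auto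

lemma lin_lip: fixes p k1 u v L :: real assumes "\<bar>p\<bar> \<le> L"
  shows "p * u + k1 \<le> p * v + k1 + L * \<bar>u - v\<bar>"
proof -
  have "p * (u-v) \<le> \<bar>p\<bar> * \<bar>u - v\<bar>" by (metis abs_ge_self abs_mult)
  also have "\<dots> \<le> L * \<bar>u - v\<bar>" using assms by (simp add: mult_right_mono)
  finally show ?thesis by (simp add: algebra_simps)
qed

lemma maxaff_lip: fixes p k1 p' k2 u v L :: real
  assumes "\<bar>p\<bar> \<le> L" "\<bar>p'\<bar> \<le> L"
  shows "max (p * u + k1) (p' * u + k2) \<le> max (p * v + k1) (p' * v + k2) + L * \<bar>u - v\<bar>"
  using lin_lip[OF assms(1), of u k1 v] lin_lip[OF assms(2), of u k2 v] by auto

lemma maxaff_gain: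
  fixes p k1 p' k2 L M t ya yb :: real
  assumes L: "\<bar>p\<bar> < L" "\<bar>p'\<bar> < L"
    and ya: "\<bar>ya\<bar> \<le> M" "max (p * ya + k1) (p' * ya + k2) \<le> 0"
    and yb: "\<bar>yb\<bar> \<le> M" "0 < max (p * yb + k1) (p' * yb + k2)"
    and t: "0 < t" "t \<le> L"
  shows "t / L * std_normal_density (M + 1) \<le> measure NN {y. 0 < max (p * y + k1) (p' * y + k2) \<and> max (p * y + k1) (p' * y + k2) \<le> t}"
proof (rule gain1d[where f = "\<lambda>y. max (p * y + k1) (p' * y + k2)"])
  show "0 < L" using L by linarith
  show "\<And>u v. max (p * u + k1) (p' * u + k2) \<le> max (p * v + k1) (p' * v + k2) + L * \<bar>u - v\<bar>"
    using L by (intro maxaff_lip) auto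
  show "\<And>u v z. max (p * u + k1) (p' * u + k2) \<le> 0 \<Longrightarrow> max (p * v + k1) (p' * v + k2) \<le> 0 \<Longrightarrow> u \<le> z \<Longrightarrow> z \<le> v \<Longrightarrow> max (p * z + k1) (p' * z + k2) \<le> 0"
    by (rule maxaff_iv)
  show "(\<lambda>y. max (p * y + k1) (p' * y + k2)) \<in> borel_measurable borel" by measurable
qed (use ya yb t in auto)



lemma SS_sets': "SS a b c d w1 w2 \<in> sets (borel \<Otimes>\<^sub>M borel)"
  using SS_sets by simp

lemma core:
  fixes a b c d \<delta> \<epsilon> :: real
  assumes \<delta>: "0 < \<delta>" and \<epsilon>: "0 < \<epsilon>"
  shows "\<exists>\<kappa>>0. \<exists>L>0. \<forall>w1 w2 t. 0 < t \<longrightarrow> t \<le> L \<longrightarrow> \<delta> \<le> measure GG (SS a b c d w1 w2) \<longrightarrow>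
            measure GG (SS a b c d w1 w2) \<le> 1 - \<epsilon> \<longrightarrow>
            measure GG (SS a b c d w1 w2) + \<kappa> * t \<le> measure GG (SS a b c d (w1 + t) (w2 + t))"
proof -
  interpret P: prob_space GG by (rule GG_prob)
  interpret N: prob_space NN by (rule NN_prob)
  have cs: "UNIV - X \<in> sets (borel \<Otimes>\<^sub>M borel)" if "X \<in> sets (borel \<Otimes>\<^sub>M borel)" for X :: "(real \<times> real) set"
    using sets.compl_sets[OF that] by (simp add: space_pair_measure)
  define \<eta> where "\<eta> = min \<delta> \<epsilon> / 2"
  have \<eta>: "0 < \<eta>" "2 * \<eta> \<le> \<delta>" "2 * \<eta> \<le> \<epsilon>" using \<delta> \<epsilon> by (auto simp: \<eta>_def)
  obtain M where M: "0 < M" "measure NN {y. M < \<bar>y\<bar>} \<le> \<eta> / 2"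
    using NN_tail[of "\<eta>/2"] \<eta> by auto
  define T where "T = {y::real. M < \<bar>y\<bar>}"
  have Tb: "T \<in> sets borel" unfolding T_def by measurable
  define B where "B = {-M..M} \<times> {-M..M}"
  have Bs: "B \<in> sets GG" unfolding B_def by simp
  have Bc: "measure GG (UNIV - B) \<le> \<eta>"
  proof -
    have "UNIV - B \<subseteq> (T \<times> UNIV) \<union> (UNIV \<times> T)" by (auto simp: B_def T_def)
    then have "measure GG (UNIV - B) \<le> measure GG ((T \<times> UNIV) \<union> (UNIV \<times> T))"
      using Tb by (intro P.finite_measure_mono) auto
    also have "\<dots> \<le> measure GG (T \<times> UNIV) + measure GG (UNIV \<times> T)"
      using Tb by (intro measure_subadditive) (auto simp: P.emeasure_eq_measure)
    also have "\<dots> = measure NN T + measure NN T"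
      using Tb by (simp add: GG_times1 GG_times2)
    finally show ?thesis using M by (simp add: T_def)
  qed
  define L where "L = \<bar>a\<bar> + \<bar>b\<bar> + \<bar>c\<bar> + \<bar>d\<bar> + 1"
  have L: "0 < L" "\<bar>a\<bar> < L" "\<bar>b\<bar> < L" "\<bar>c\<bar> < L" "\<bar>d\<bar> < L" by (auto simp: L_def)
  define \<kappa>0 where "\<kappa>0 = std_normal_density (M+1) / L"
  have \<kappa>0: "0 < \<kappa>0" using L by (simp add: \<kappa>0_def normal_density_pos)
  have main: "measure GG (SS a b c d w1 w2) + \<kappa>0 * \<eta> * t \<le> measure GG (SS a b c d (w1 + t) (w2 + t))"
    if t: "0 < t" "t \<le> L" and lo: "\<delta> \<le> measure GG (SS a b c d w1 w2)"
      and hi: "measure GG (SS a b c d w1 w2) \<le> 1 - \<epsilon>" for w1 w2 t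
  proof -
    define K where "K = SS a b c d w1 w2"
    define K' where "K' = SS a b c d (w1 + t) (w2 + t)"
    define D where "D = K' - K"
    have sK: "K \<in> sets GG" "K' \<in> sets GG" "D \<in> sets GG" by (auto simp: K_def K'_def D_def SS_sets')
    have KK': "K \<subseteq> K'" using t by (auto simp: K_def K'_def SS_def)
    have memK: "(x, y) \<in> K \<longleftrightarrow> max (b * y + (a * x - w1)) (d * y + (c * x - w2)) \<le> 0" for x y
      by (auto simp: K_def SS_def)
    have memD: "(x, y) \<in> D \<longleftrightarrow> 0 < max (b * y + (a * x - w1)) (d * y + (c * x - w2)) \<and> max (b * y + (a * x - w1)) (d * y + (c * x - w2)) \<le> t" for x y
      by (auto simp: D_def K_def K'_def SS_def)
    have memK2: "(x, y) \<in> K \<longleftrightarrow> max (a * x + (b * y - w1)) (c * x + (d * y - w2)) \<le> 0" for x y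
      by (auto simp: K_def SS_def)
    have memD2: "(x, y) \<in> D \<longleftrightarrow> 0 < max (a * x + (b * y - w1)) (c * x + (d * y - w2)) \<and> max (a * x + (b * y - w1)) (c * x + (d * y - w2)) \<le> t" for x y
      by (auto simp: D_def K_def K'_def SS_def)
    have eqD: "measure GG K' = measure GG K + measure GG D"
      using P.finite_measure_Diff[OF sK(2) sK(1)] KK' by (simp add: D_def Int_absorb1)
    have lowK: "\<eta> \<le> measure GG (K \<inter> B)"
    proof -
      have "measure GG K \<le> measure GG ((K \<inter> B) \<union> (UNIV - B))"
        using sK Bs by (intro P.finite_measure_mono) (auto intro: cs)
      also have "\<dots> \<le> measure GG (K \<inter> B) + measure GG (UNIV - B)"
        using sK Bs by (intro measure_subadditive) (auto simp: P.emeasure_eq_measure intro: cs)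
      finally show ?thesis using lo Bc \<eta> by (simp add: K_def)
    qed
    have lowKc: "\<eta> \<le> measure GG ((UNIV - K) \<inter> B)"
    proof -
      have "measure GG (UNIV - K) \<le> measure GG (((UNIV - K) \<inter> B) \<union> (UNIV - B))"
        using sK Bs by (intro P.finite_measure_mono) (auto intro: cs)
      also have "\<dots> \<le> measure GG ((UNIV - K) \<inter> B) + measure GG (UNIV - B)"
        using sK Bs by (intro measure_subadditive) (auto simp: P.emeasure_eq_measure intro: cs)
      finally have "measure GG (UNIV - K) \<le> measure GG ((UNIV - K) \<inter> B) + measure GG (UNIV - B)" .
      moreover have "measure GG (UNIV - K) = 1 - measure GG K"
        using P.prob_compl[OF sK(1)] by (simp add: space_pair_measure)
      ultimately show ?thesis using hi Bc \<eta> by (simp add: K_def)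
    qed
    have gain: "\<kappa>0 * t * std_normal_density 0 \<le> 0 \<or> True" by simp
    have pt_gain: "ennreal (\<kappa>0 * t) * ennreal m \<le> ennreal m'" if "m \<le> 1" "\<kappa>0 * t \<le> m'" "0 \<le> m" for m m'
    proof -
      have "\<kappa>0 * t * m \<le> \<kappa>0 * t" using that \<kappa>0 t by (simp add: mult_left_le)
      then have "\<kappa>0 * t * m \<le> m'" using that by linarith
      then show ?thesis using that \<kappa>0 t by (simp add: ennreal_mult'[symmetric] ennreal_leI)
    qed
    have key: "\<kappa>0 * t * \<eta> \<le> measure GG D"
    proof (cases "\<forall>x\<in>{-M..M}. \<exists>y\<in>{-M..M}. (x, y) \<notin> K")
      case True
      note noV = this
      have "\<kappa>0 * t * measure GG (K \<inter> B) \<le> measure GG D"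
      proof (rule integ_v)
        show "K \<inter> B \<in> sets GG" using sK Bs by auto
        show "D \<in> sets GG" by (rule sK)
        show "0 \<le> \<kappa>0 * t" using \<kappa>0 t by simp
        fix x
        show "ennreal (\<kappa>0 * t) * emeasure NN (Pair x -` (K \<inter> B)) \<le> emeasure NN (Pair x -` D)"
        proof (cases "x \<in> {-M..M} \<and> (\<exists>y\<in>{-M..M}. (x, y) \<in> K)")
          case True
          then obtain y0 where y0: "y0 \<in> {-M..M}" "(x, y0) \<in> K" by auto
          have xM: "x \<in> {-M..M}" using True by blast
          obtain y1 where y1: "y1 \<in> {-M..M}" "(x, y1) \<notin> K" using bspec[OF noV xM] by blast
          have "t / L * std_normal_density (M+1) \<le> measure NN {y. 0 < max (b * y + (a * x - w1)) (d * y + (c * x - w2)) \<and> max (b * y + (a * x - w1)) (d * y + (c * x - w2)) \<le> t}"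
            using y0 y1 t L by (intro maxaff_gain[where ya=y0 and yb=y1]) (auto simp: memK)
          also have "{y. 0 < max (b * y + (a * x - w1)) (d * y + (c * x - w2)) \<and> max (b * y + (a * x - w1)) (d * y + (c * x - w2)) \<le> t} = Pair x -` D"
            by (auto simp: memD)
          finally have g: "\<kappa>0 * t \<le> measure NN (Pair x -` D)" by (simp add: \<kappa>0_def mult.commute)
          show ?thesis
            using pt_gain[OF N.prob_le_1 g measure_nonneg]
            by (simp add: N.emeasure_eq_measure)
        next
          case False
          then have "Pair x -` (K \<inter> B) = {}" by (auto simp: B_def)
          then show ?thesis by simp
        qed
      qed
      moreover have "\<kappa>0 * t * \<eta> \<le> \<kappa>0 * t * measure GG (K \<inter> B)"
        using lowK \<kappa>0 t by (simp add: mult_left_mono)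
      ultimately show ?thesis by linarith
    next
      case False
      then obtain x0 where x0: "x0 \<in> {-M..M}" "\<And>y. y \<in> {-M..M} \<Longrightarrow> (x0, y) \<in> K" by auto
      show ?thesis
      proof (cases "\<forall>y\<in>{-M..M}. \<exists>x\<in>{-M..M}. (x, y) \<in> K")
        case False
        then obtain y0 where "y0 \<in> {-M..M}" "\<And>x. x \<in> {-M..M} \<Longrightarrow> (x, y0) \<notin> K" by auto
        then show ?thesis using x0 by blast
      next
        case True
        note noH = this
        let ?sw = "\<lambda>(x::real, y::real). (y, x)"
        have swm: "?sw \<in> measurable GG GG" by (simp add: measurable_pair_swap')
        have swp: "?sw -` X \<in> sets GG" if "X \<in> sets GG" for X
          using measurable_sets[OF swm that] by (simp add: space_pair_measure)
        have sKB: "(UNIV - K) \<inter> B \<in> sets GG" using sK Bs by (auto intro: cs)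
        have sA: "?sw -` ((UNIV - K) \<inter> B) \<in> sets GG" by (rule swp[OF sKB])
        have sD: "?sw -` D \<in> sets GG" by (rule swp[OF sK(3)])
        have i1: "\<kappa>0 * t * measure GG (?sw -` ((UNIV - K) \<inter> B)) \<le> measure GG (?sw -` D)"
        proof (rule integ_v[OF sA sD])
          show "0 \<le> \<kappa>0 * t" using \<kappa>0 t by simp
          fix y
          show "ennreal (\<kappa>0 * t) * emeasure NN (Pair y -` (?sw -` ((UNIV - K) \<inter> B))) \<le> emeasure NN (Pair y -` (?sw -` D))"
          proof (cases "y \<in> {-M..M} \<and> (\<exists>x\<in>{-M..M}. (x, y) \<notin> K)")
            case True
            then obtain x1 where x1: "x1 \<in> {-M..M}" "(x1, y) \<notin> K" by auto
            have yM: "y \<in> {-M..M}" using True by blast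
            obtain x2 where x2: "x2 \<in> {-M..M}" "(x2, y) \<in> K" using bspec[OF noH yM] by blast
            have "t / L * std_normal_density (M+1) \<le> measure NN {x. 0 < max (a * x + (b * y - w1)) (c * x + (d * y - w2)) \<and> max (a * x + (b * y - w1)) (c * x + (d * y - w2)) \<le> t}"
              using x1 x2 t L by (intro maxaff_gain[where ya=x2 and yb=x1]) (auto simp: memK2)
            also have "{x. 0 < max (a * x + (b * y - w1)) (c * x + (d * y - w2)) \<and> max (a * x + (b * y - w1)) (c * x + (d * y - w2)) \<le> t} = Pair y -` (?sw -` D)"
              by (auto simp: memD2)
            finally have g: "\<kappa>0 * t \<le> measure NN (Pair y -` (?sw -` D))" by (simp add: \<kappa>0_def mult.commute)
            show ?thesis
              using pt_gain[OF N.prob_le_1 g measure_nonneg]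
              by (simp add: N.emeasure_eq_measure)
          next
            case False
            then have "Pair y -` (?sw -` ((UNIV - K) \<inter> B)) = {}" by (auto simp: B_def)
            then show ?thesis by simp
          qed
        qed
        have e1: "measure GG (?sw -` ((UNIV - K) \<inter> B)) = measure GG ((UNIV - K) \<inter> B)"
          using sKB by (rule GG_swap)
        have e2: "measure GG (?sw -` D) = measure GG D"
          using sK(3) by (rule GG_swap)
        have i2: "\<kappa>0 * t * measure GG ((UNIV - K) \<inter> B) \<le> measure GG D"
          using i1 unfolding e1 e2 .
        have "\<kappa>0 * t * \<eta> \<le> \<kappa>0 * t * measure GG ((UNIV - K) \<inter> B)"
          using lowKc \<kappa>0 t by (simp add: mult_left_mono)
        then show ?thesis using i2 by linarith
      qed
    qed
    show "measure GG (SS a b c d w1 w2) + \<kappa>0 * \<eta> * t \<le> measure GG (SS a b c d (w1 + t) (w2 + t))"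
      using key eqD by (simp add: K_def K'_def mult_ac)
  qed
  show ?thesis
    using main \<kappa>0 \<eta> L(1) by (intro exI[of _ "\<kappa>0 * \<eta>"] conjI exI[of _ L]) auto
qed



lemma Psi_eq:
  "Psi z1 z2 V = measure GG (SS (sqrt_factor V $1$1) (sqrt_factor V $1$2) (sqrt_factor V $2$1) (sqrt_factor V $2$2) z1 z2)"
proof -
  define A where "A = sqrt_factor V"
  define f where "f = (\<lambda>(z1::real, z2::real). (A$1$1 * z1 + A$1$2 * z2, A$2$1 * z1 + A$2$2 * z2))"
  have fm: "f \<in> measurable GG borel"
  proof -
    have fe: "f = (\<lambda>z. (A$1$1 * fst z + A$1$2 * snd z, A$2$1 * fst z + A$2$2 * snd z))"
      by (auto simp: f_def fun_eq_iff split_beta)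
    have "continuous_on UNIV f" unfolding fe by (intro continuous_intros)
    then have fbm: "f \<in> borel_measurable borel" by (rule borel_measurable_continuous_onI)
    have sGG: "sets GG = sets borel" by (simp only: sets_GG borel_prod)
    show ?thesis using fbm unfolding measurable_cong_sets[OF sGG refl] .
  qed
  have X: "{u::real\<times>real. fst u \<le> z1 \<and> snd u \<le> z2} \<in> sets borel"
  proof -
    have "{..z1} \<times> {..z2} \<in> sets (borel \<Otimes>\<^sub>M (borel :: real measure))"
      by (intro pair_measureI) auto
    moreover have "{u::real\<times>real. fst u \<le> z1 \<and> snd u \<le> z2} = {..z1} \<times> {..z2}" by auto
    ultimately show ?thesis by (simp only: borel_prod)
  qed
  have "Psi z1 z2 V = measure (distr GG borel f) {u. fst u \<le> z1 \<and> snd u \<le> z2}"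
    by (simp add: Psi_def gauss2_def std_normal2_GG A_def f_def Let_def)
  also have "\<dots> = measure GG (f -` {u. fst u \<le> z1 \<and> snd u \<le> z2} \<inter> space GG)"
    by (rule measure_distr[OF fm X])
  also have "f -` {u. fst u \<le> z1 \<and> snd u \<le> z2} \<inter> space GG = SS (A $1$1) (A $1$2) (A $2$1) (A $2$2) z1 z2"
    by (auto simp: f_def SS_def space_pair_measure)
  finally show ?thesis by (simp add: A_def)
qed

lemma SS_mono: "0 \<le> t \<Longrightarrow> SS a b c d w1 w2 \<subseteq> SS a b c d (w1 + t) (w2 + t)"
  by (auto simp: SS_def)

theorem lemma1:
  fixes V :: "real^2^2" and \<epsilon> :: real
  assumes "0 < \<epsilon>" "\<epsilon> < 1"
    and "psd2 V" "V \<noteq> 0"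
  shows "\<exists>h::real. \<forall>lam::nat \<Rightarrow> real. (\<forall>n. 0 < lam n) \<and> lam \<longlonglongrightarrow> 0 \<longrightarrow>
           (\<forall>\<^sub>F n in sequentially. Psi_inv V (\<epsilon> + lam n) \<subseteq> shift1 (Psi_inv V \<epsilon>) (h * lam n))"
proof -
  interpret P: prob_space GG by (rule GG_prob)
  define A where "A = sqrt_factor V"
  define F where "F = (\<lambda>w1 w2. measure GG (SS (A$1$1) (A$1$2) (A$2$1) (A$2$2) w1 w2))"
  have PsiF: "Psi z1 z2 V = F z1 z2" for z1 z2 by (simp add: Psi_eq F_def A_def)
  have Fmono: "F w1 w2 \<le> F (w1 + t) (w2 + t)" if "0 \<le> t" for w1 w2 t
    unfolding F_def using that by (intro P.finite_measure_mono SS_mono) (auto simp: SS_sets')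
  have d: "0 < (1 - \<epsilon>) / 2" using assms by simp
  obtain \<kappa> L where \<kappa>: "0 < \<kappa>" "0 < L" and core': "\<And>w1 w2 t. 0 < t \<Longrightarrow> t \<le> L \<Longrightarrow>
      (1 - \<epsilon>) / 2 \<le> F w1 w2 \<Longrightarrow> F w1 w2 \<le> 1 - \<epsilon> \<Longrightarrow> F w1 w2 + \<kappa> * t \<le> F (w1 + t) (w2 + t)"
    using core[OF d assms(1), of "A$1$1" "A$1$2" "A$2$1" "A$2$2"] unfolding F_def by blast
  show ?thesis
  proof (intro exI[of _ "1 / \<kappa>"] allI impI)
    fix lam :: "nat \<Rightarrow> real" assume lam: "(\<forall>n. 0 < lam n) \<and> lam \<longlonglongrightarrow> 0"
    have bnd: "0 < min ((1 - \<epsilon>) / 2) (\<kappa> * L)" using d \<kappa> by simp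
    have ev: "\<forall>\<^sub>F n in sequentially. lam n < min ((1 - \<epsilon>) / 2) (\<kappa> * L)"
      using order_tendstoD(2)[OF conjunct2[OF lam] bnd] .
    show "\<forall>\<^sub>F n in sequentially. Psi_inv V (\<epsilon> + lam n) \<subseteq> shift1 (Psi_inv V \<epsilon>) (1 / \<kappa> * lam n)"
    proof (rule eventually_mono[OF ev], rule subsetI)
      fix n z assume ln: "lam n < min ((1 - \<epsilon>) / 2) (\<kappa> * L)" and z: "z \<in> Psi_inv V (\<epsilon> + lam n)"
      obtain z1 z2 where zz: "z = (z1, z2)" by (cases z)
      define t where "t = 1 / \<kappa> * lam n"
      have lp: "0 < lam n" using lam by simp
      have t: "0 < t" "t \<le> L" "\<kappa> * t = lam n" using \<kappa> lp ln by (auto simp: t_def field_simps)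
      have Fz: "1 - (\<epsilon> + lam n) \<le> F (- z1) (- z2)" using z by (simp add: zz Psi_inv_def PsiF)
      have goal: "1 - \<epsilon> \<le> F (- z1 + t) (- z2 + t)"
      proof (cases "1 - \<epsilon> \<le> F (- z1) (- z2)")
        case True then show ?thesis using Fmono[of t "- z1" "- z2"] t by linarith
      next
        case False
        have "F (- z1) (- z2) + \<kappa> * t \<le> F (- z1 + t) (- z2 + t)"
          using False Fz ln t by (intro core') auto
        then show ?thesis using Fz t by linarith
      qed
      have "(z1 - t, z2 - t) \<in> Psi_inv V \<epsilon>" using goal by (simp add: Psi_inv_def PsiF)
      moreover have "z = (\<lambda>(a1, a2). (a1 + t, a2 + t)) (z1 - t, z2 - t)" by (simp add: zz)
      ultimately show "z \<in> shift1 (Psi_inv V \<epsilon>) (1 / \<kappa> * lam n)"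
        unfolding shift1_def t_def[symmetric] by (rule rev_image_eqI)
    qed
  qed
qed

end
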